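(* Let $G=\langle V,E_s\rangle$ be an undirected graph with $V=\{1,\dots,n\}$, where edges are treated as bidirected (so $(i,j)\in E_s$ iff $(j,i)\in E_s$, no loops). Let $\mu_{ij}=\mu_{ji}\ge 0$ ($i\neq j$) be requirements, and let $\delta=(\delta_1,\dots,\delta_n)$ be a sequence of positive integers with $\sum_i\delta_i=2(n-1)$ such that $G$ has at least one spanning tree in which every vertex $i$ has degree $\delta_i$ (an admissible tree). Let $m=|\{i:\delta_i>1\}|$, $L=m+2$, and let $M\ge L$ be a constant. For a spanning tree $T$ let $C_A(T)=\sum_{i\neq j}\mu_{ij}d_T(i,j)$, where $d_T(i,j)$ is the number of edges of the path from $i$ to $j$ in $T$; an admissible tree minimizing $C_A$ is called optimal. Consider the mixed-integer linear program (F1L) in variables $x_{ij}=x_{ji}\in\{0,1\}$ for $(i,j)\in E_s$, integer variables $d_{ij}=d_{ji}\in\{1,\dots,L\}$ for $i\neq j\in V$, and $y_{ikj}\in\{0,1\}$ for $i<j$, $(i,k)\in E_s$, $k\neq j$: minimize $\sum_{i,j=1,\,i\neq j}^n\mu_{ij}d_{ij}$ subject to - $d_{ij}\ge d_{kj}+1-M(1-y_{ikj})$ for all $i<j$ and $(i,k)\in E_s$ with $k\neq j$; - $\sum_{k\neq j:(i,k)\in E_s}y_{ikj}=1-x_{ij}$ for all $(i,j)\in E_s$, $i<j$; - $\sum_{k\neq j:(i,k)\in E_s}y_{ikj}=1$ for all $i<j$ with $(i,j)\notin E_s$; - $y_{ikj}\le x_{ik}$ for all $i<j$, $(i,k)\in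 E_s$, $k\neq j$; - $\sum_{j:(i,j)\in E_s}x_{ij}=\delta_i$ for all $i\in V$. Let $(x^*,y^*,d^* )$ be an optimal solution of F1L. Then the edges $\{(i,j)\in E_s:x^*_{ij}=1\}$ form an optimal tree, and the optimal objective value equals its communication cost $C_A$.
   Context: Variable $y_{ikj}$ is intended to equal 1 iff the shortest path from $i$ to $j$ in the tree goes through the neighbour $k$ of $i$; $d_{ij}$ is intended to be the tree distance between $i$ and $j$. *)

theory Defs
  imports Complex_Main
begin

(* Graphs: vertex set V = {1..n}; undirected edges stored as a symmetric set of
   ordered pairs (bidirected), no loops. *)

definition walk :: "(nat \<times> nat) set \<Rightarrow> nat list \<Rightarrow> bool" where
  "walk T vs \<longleftrightarrow> vs \<noteq> [] \<and> (\<forall>i. Suc i < length vs \<longrightarrow> (vs ! i, vs ! Suc i) \<in> T)"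

definition connected_on :: "nat set \<Rightarrow> (nat \<times> nat) set \<Rightarrow> bool" where
  "connected_on V T \<longleftrightarrow>
     (\<forall>i\<in>V. \<forall>j\<in>V. \<exists>vs. walk T vs \<and> hd vs = i \<and> last vs = j)"

definition is_cycle :: "(nat \<times> nat) set \<Rightarrow> nat list \<Rightarrow> bool" where
  "is_cycle T vs \<longleftrightarrow> length vs \<ge> 3 \<and> distinct vs \<and> walk T vs \<and> (last vs, hd vs) \<in> T"

definition acyclic_graph :: "(nat \<times> nat) set \<Rightarrow> bool" where
  "acyclic_graph T \<longleftrightarrow> (\<nexists>vs. is_cycle T vs)"

definition spanning_tree :: "nat set \<Rightarrow> (nat \<times> nat) set \<Rightarrow> (nat \<times> nat) set \<Rightarrow> bool" where
  "spanning_tree V E T \<longleftrightarrow> T \<subseteq> E \<and> sym T \<and> connected_on V T \<and> acyclic_graph T"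

definition deg :: "(nat \<times> nat) set \<Rightarrow> nat \<Rightarrow> nat" where
  "deg T i = card {j. (i, j) \<in> T}"

definition tdist :: "(nat \<times> nat) set \<Rightarrow> nat \<Rightarrow> nat \<Rightarrow> nat" where
  "tdist T i j = (LEAST k. \<exists>vs. walk T vs \<and> hd vs = i \<and> last vs = j \<and> length vs = Suc k)"

definition comm_cost :: "nat \<Rightarrow> (nat \<Rightarrow> nat \<Rightarrow> real) \<Rightarrow> (nat \<times> nat) set \<Rightarrow> real" where
  "comm_cost n \<mu> T = (\<Sum>i\<in>{1..n}. \<Sum>j\<in>{1..n} - {i}. \<mu> i j * real (tdist T i j))"

definition admissible_tree ::
  "nat \<Rightarrow> (nat \<times> nat) set \<Rightarrow> (nat \<Rightarrow> nat) \<Rightarrow> (nat \<times> nat) set \<Rightarrow> bool" where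
  "admissible_tree n E \<delta> T \<longleftrightarrow> spanning_tree {1..n} E T \<and> (\<forall>i\<in>{1..n}. deg T i = \<delta> i)"

definition optimal_tree ::
  "nat \<Rightarrow> (nat \<times> nat) set \<Rightarrow> (nat \<Rightarrow> nat \<Rightarrow> real) \<Rightarrow> (nat \<Rightarrow> nat) \<Rightarrow> (nat \<times> nat) set \<Rightarrow> bool" where
  "optimal_tree n E \<mu> \<delta> T \<longleftrightarrow> admissible_tree n E \<delta> T \<and>
     (\<forall>T'. admissible_tree n E \<delta> T' \<longrightarrow> comm_cost n \<mu> T \<le> comm_cost n \<mu> T')"

(* The MILP F1L.  x i j, d i j, y i k j are integer-valued variables; only the
   indices listed in the formulation are constrained. L = m + 2. *)
definition F1L_feasible ::
  "nat \<Rightarrow> (nat \<times> nat) set \<Rightarrow> (nat \<Rightarrow> nat) \<Rightarrow> nat \<Rightarrow> real \<Rightarrow>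
   (nat \<Rightarrow> nat \<Rightarrow> int) \<Rightarrow> (nat \<Rightarrow> nat \<Rightarrow> nat \<Rightarrow> int) \<Rightarrow> (nat \<Rightarrow> nat \<Rightarrow> int) \<Rightarrow> bool" where
  "F1L_feasible n E \<delta> L M x y d \<longleftrightarrow>
     \<comment> \<open>domains\<close>
     (\<forall>(i,j)\<in>E. x i j = x j i \<and> x i j \<in> {0,1}) \<and>
     (\<forall>i\<in>{1..n}. \<forall>j\<in>{1..n}. i \<noteq> j \<longrightarrow> d i j = d j i \<and> 1 \<le> d i j \<and> d i j \<le> int L) \<and>
     (\<forall>i\<in>{1..n}. \<forall>j\<in>{1..n}. \<forall>k. i < j \<and> (i,k) \<in> E \<and> k \<noteq> j \<longrightarrow> y i k j \<in> {0,1}) \<and>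
     \<comment> \<open>distance constraints\<close>
     (\<forall>i\<in>{1..n}. \<forall>j\<in>{1..n}. \<forall>k. i < j \<and> (i,k) \<in> E \<and> k \<noteq> j \<longrightarrow>
        real_of_int (d i j) \<ge> real_of_int (d k j) + 1 - M * (1 - real_of_int (y i k j))) \<and>
     \<comment> \<open>next-hop constraints\<close>
     (\<forall>(i,j)\<in>E. i < j \<longrightarrow> (\<Sum>k\<in>{k\<in>{1..n}. (i,k) \<in> E \<and> k \<noteq> j}. y i k j) = 1 - x i j) \<and>
     (\<forall>i\<in>{1..n}. \<forall>j\<in>{1..n}. i < j \<and> (i,j) \<notin> E \<longrightarrow>
        (\<Sum>k\<in>{k\<in>{1..n}. (i,k) \<in> E \<and> k \<noteq> j}. y i k j) = 1) \<and>
     (\<forall>i\<in>{1..n}. \<forall>j\<in>{1..n}. \<forall>k. i < j \<and> (i,k) \<in> E \<and> k \<noteq> j \<longrightarrow> y i k j \<le> x i k) \<and>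
     \<comment> \<open>degree constraints\<close>
     (\<forall>i\<in>{1..n}. (\<Sum>j\<in>{j\<in>{1..n}. (i,j) \<in> E}. x i j) = int (\<delta> i))"

definition F1L_obj :: "nat \<Rightarrow> (nat \<Rightarrow> nat \<Rightarrow> real) \<Rightarrow> (nat \<Rightarrow> nat \<Rightarrow> int) \<Rightarrow> real" where
  "F1L_obj n \<mu> d = (\<Sum>i\<in>{1..n}. \<Sum>j\<in>{1..n} - {i}. \<mu> i j * real_of_int (d i j))"

definition F1L_optimal ::
  "nat \<Rightarrow> (nat \<times> nat) set \<Rightarrow> (nat \<Rightarrow> nat \<Rightarrow> real) \<Rightarrow> (nat \<Rightarrow> nat) \<Rightarrow> nat \<Rightarrow> real \<Rightarrow>
   (nat \<Rightarrow> nat \<Rightarrow> int) \<Rightarrow> (nat \<Rightarrow> nat \<Rightarrow> nat \<Rightarrow> int) \<Rightarrow> (nat \<Rightarrow> nat \<Rightarrow> int) \<Rightarrow> bool" where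
  "F1L_optimal n E \<mu> \<delta> L M x y d \<longleftrightarrow> F1L_feasible n E \<delta> L M x y d \<and>
     (\<forall>x' y' d'. F1L_feasible n E \<delta> L M x' y' d' \<longrightarrow> F1L_obj n \<mu> d \<le> F1L_obj n \<mu> d')"

end

theory Submission
  imports Defs
begin


lemma walk_Nil[simp]: "\<not> walk T []" by (simp add: walk_def)
lemma walk_single[simp]: "walk T [a]" by (simp add: walk_def)
lemma walk_Cons2[simp]: "walk T (a # b # vs) \<longleftrightarrow> (a,b) \<in> T \<and> walk T (b # vs)"
proof
  assume w: "walk T (a # b # vs)"
  have "Suc 0 < length (a # b # vs)" by simp
  then have "((a # b # vs) ! 0, (a # b # vs) ! Suc 0) \<in> T" using w unfolding walk_def by blast
  then have "(a,b) \<in> T" by simp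
  moreover have "walk T (b # vs)" unfolding walk_def
  proof (intro conjI allI impI)
    fix i assume "Suc i < length (b # vs)"
    then have "Suc (Suc i) < length (a # b # vs)" by simp
    then have "((a # b # vs) ! Suc i, (a # b # vs) ! Suc (Suc i)) \<in> T" using w unfolding walk_def by blast
    then show "((b # vs) ! i, (b # vs) ! Suc i) \<in> T" by simp
  qed simp
  ultimately show "(a,b) \<in> T \<and> walk T (b # vs)" by simp
next
  assume h: "(a,b) \<in> T \<and> walk T (b # vs)"
  show "walk T (a # b # vs)" unfolding walk_def
  proof (intro conjI allI impI)
    fix i assume i: "Suc i < length (a # b # vs)"
    show "((a # b # vs) ! i, (a # b # vs) ! Suc i) \<in> T"
    proof (cases i)
      case 0 then show ?thesis using h by simp
    next
      case (Suc k) then show ?thesis using h i unfolding walk_def by simp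
    qed
  qed simp
qed

lemma walk_append: "walk T (xs @ a # ys) \<longleftrightarrow> walk T (xs @ [a]) \<and> walk T (a # ys)"
  by (induction xs rule: induct_list012) auto

lemma walk_rev: assumes "sym T" "walk T vs" shows "walk T (rev vs)"
  using assms(2)
proof (induction vs rule: induct_list012)
  case (3 x y zs)
  have "walk T (rev zs @ [y, x])" 
    using walk_append[of T "rev zs" y "[x]"] 3 by (auto intro: symD[OF assms(1)])
  then show ?case by simp
qed auto

lemma walk_in: assumes "walk T vs" "T \<subseteq> V \<times> V" "length vs \<ge> 2" "q < length vs" shows "vs ! q \<in> V"
proof (cases "Suc q < length vs")
  case True then show ?thesis using assms unfolding walk_def by blast
next
  case False
  then have "Suc (q - 1) < length vs" "q = Suc (q - 1)" using assms by auto
  then show ?thesis using assms unfolding walk_def by (metis SigmaD2 subsetD)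
qed

lemma tdist_le: "walk T vs \<Longrightarrow> hd vs = i \<Longrightarrow> last vs = j \<Longrightarrow> tdist T i j \<le> length vs - 1"
  unfolding tdist_def by (rule Least_le) (cases vs; auto)

lemma tdist_ex: "walk T vs \<Longrightarrow> hd vs = i \<Longrightarrow> last vs = j \<Longrightarrow>
   \<exists>ws. walk T ws \<and> hd ws = i \<and> last ws = j \<and> length ws = Suc (tdist T i j)"
  unfolding tdist_def
  apply (rule LeastI_ex)
  apply (rule exI[of _ "length vs - 1"], rule exI[of _ vs])
  by (cases vs; auto)

lemma tdist_sym: assumes "sym T" shows "tdist T i j = tdist T j i"
proof -
  have sw: "\<And>i j k. (\<exists>vs. walk T vs \<and> hd vs = i \<and> last vs = j \<and> length vs = Suc k) \<Longrightarrow>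
     (\<exists>vs. walk T vs \<and> hd vs = j \<and> last vs = i \<and> length vs = Suc k)"
  proof -
    fix i j k assume "\<exists>vs. walk T vs \<and> hd vs = i \<and> last vs = j \<and> length vs = Suc k"
    then obtain vs where "walk T vs" "hd vs = i" "last vs = j" "length vs = Suc k" by blast
    then show "\<exists>vs. walk T vs \<and> hd vs = j \<and> last vs = i \<and> length vs = Suc k"
      by (intro exI[of _ "rev vs"]) (auto simp: walk_rev assms hd_rev last_rev)
  qed
  have "(\<lambda>k. \<exists>vs. walk T vs \<and> hd vs = i \<and> last vs = j \<and> length vs = Suc k) =
             (\<lambda>k. \<exists>vs. walk T vs \<and> hd vs = j \<and> last vs = i \<and> length vs = Suc k)"
  proof (rule ext, rule iffI)
    fix k
    show "\<exists>vs. walk T vs \<and> hd vs = i \<and> last vs = j \<and> length vs = Suc k \<Longrightarrow>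
      \<exists>vs. walk T vs \<and> hd vs = j \<and> last vs = i \<and> length vs = Suc k" by (rule sw)
    show "\<exists>vs. walk T vs \<and> hd vs = j \<and> last vs = i \<and> length vs = Suc k \<Longrightarrow>
      \<exists>vs. walk T vs \<and> hd vs = i \<and> last vs = j \<and> length vs = Suc k" by (rule sw)
  qed
  then show ?thesis unfolding tdist_def by simp
qed

lemma shortest_distinct:
  assumes "walk T vs" "hd vs = i" "last vs = j" "length vs = Suc (tdist T i j)"
  shows "distinct vs"
proof (rule ccontr)
  assume "\<not> distinct vs"
  then obtain xs a ys zs where vs: "vs = xs @ [a] @ ys @ [a] @ zs" using not_distinct_decomp by blast
  let ?ws = "xs @ a # zs"
  have w1: "walk T (xs @ [a])" "walk T (a # (ys @ a # zs))"
    using assms(1) walk_append[of T xs a "ys @ a # zs"] unfolding vs by auto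
  have "walk T (a # zs)" using w1(2) walk_append[of T "a # ys" a zs] by simp
  then have "walk T ?ws" using w1(1) walk_append[of T xs a zs] by simp
  moreover have "hd ?ws = i" using assms(2) unfolding vs by (cases xs) auto
  moreover have "last ?ws = j" using assms(3) unfolding vs by (cases zs) auto
  ultimately have "tdist T i j \<le> length ?ws - 1" by (rule tdist_le)
  then show False using assms(4) unfolding vs by simp
qed

lemma tdist_pos: "walk T vs \<Longrightarrow> hd vs = i \<Longrightarrow> last vs = j \<Longrightarrow> i \<noteq> j \<Longrightarrow> tdist T i j \<ge> 1"
proof -
  assume a: "walk T vs" "hd vs = i" "last vs = j" "i \<noteq> j"
  then obtain ws where ws: "walk T ws" "hd ws = i" "last ws = j" "length ws = Suc (tdist T i j)"
    using tdist_ex by blast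
  show ?thesis
  proof (rule ccontr)
    assume "\<not> 1 \<le> tdist T i j"
    then have "length ws = 1" using ws by simp
    then obtain a where "ws = [a]" by (cases ws) auto
    then show False using ws a by simp
  qed
qed

lemma closer_neighbor:
  assumes "walk T vs" "hd vs = v" "last vs = r" "v \<noteq> r"
  shows "\<exists>w. (v, w) \<in> T \<and> tdist T w r < tdist T v r"
proof -
  obtain ws where ws: "walk T ws" "hd ws = v" "last ws = r" "length ws = Suc (tdist T v r)"
    using tdist_ex assms by blast
  have "length ws \<noteq> 1"
  proof
    assume "length ws = 1"
    then obtain a where "ws = [a]" by (cases ws) auto
    then show False using ws(2,3) assms(4) by simp
  qed
  have ne: "ws \<noteq> []" using ws(1) by auto
  then have ws1: "ws = v # tl ws" using ws(2) by (cases ws) auto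
  then have "tl ws \<noteq> []" using \<open>length ws \<noteq> 1\<close> by (metis length_Cons list.size(3) One_nat_def)
  then obtain w rest where "tl ws = w # rest" by (cases "tl ws") auto
  then have wr: "ws = v # w # rest" using ws1 by simp
  have "walk T (w # rest)" "(v, w) \<in> T" using ws(1) wr by auto
  moreover have "tdist T w r \<le> length (w # rest) - 1"
    using calculation(1) ws(3) wr by (intro tdist_le) auto
  ultimately show ?thesis using ws(4) wr by (intro exI[of _ w]) auto
qed

lemma acyclic_by_count:
  assumes fin: "finite V" and TV: "T \<subseteq> V \<times> V" and sym: "sym T" and conn: "connected_on V T"
    and card: "card T = 2 * (card V - 1)"
  shows "acyclic_graph T"
  unfolding acyclic_graph_def
proof
  assume "\<exists>vs. is_cycle T vs"
  then obtain vs where cyc: "length vs \<ge> 3" "distinct vs" "walk T vs" "(last vs, hd vs) \<in> T"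
    unfolding is_cycle_def by blast
  define m where "m = length vs"
  have inV: "\<And>q. q < m \<Longrightarrow> vs ! q \<in> V" using walk_in[OF cyc(3) TV] cyc(1) m_def by auto
  define r where "r = vs ! 0"
  have "0 < m" using cyc(1) m_def by auto
  then have rV: "r \<in> V" using inV[of 0] r_def by blast
  define D where "D v = tdist T v r" for v
  have ex: "\<exists>w. (v, w) \<in> T \<and> D w < D v" if "v \<in> V - {r}" for v
  proof -
    have vV: "v \<in> V" "v \<noteq> r" using that by auto
    obtain ws where ws: "walk T ws" "hd ws = v" "last ws = r"
      using conn[unfolded connected_on_def, rule_format, OF vV(1) rV] by blast
    show ?thesis unfolding D_def by (rule closer_neighbor[OF ws vV(2)])
  qed
  define p where "p v = (SOME w. (v, w) \<in> T \<and> D w < D v)" for v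
  have p: "(v, p v) \<in> T \<and> D (p v) < D v" if "v \<in> V - {r}" for v
    unfolding p_def by (rule someI_ex[OF ex[OF that]])
  define A where "A = (\<lambda>v. (v, p v)) ` (V - {r})"
  define B where "B = (\<lambda>v. (p v, v)) ` (V - {r})"
  have cA: "card A = card V - 1" unfolding A_def
    by (subst card_image) (auto simp: inj_on_def fin rV)
  have cB: "card B = card V - 1" unfolding B_def
    by (subst card_image) (auto simp: inj_on_def fin rV)
  have disj: "A \<inter> B = {}"
  proof -
    { fix v w assume "v \<in> V - {r}" "w \<in> V - {r}" "(v, p v) = (p w, w)"
      then have "v = p w" "w = p v" by auto
      then have False using p[OF \<open>v \<in> V - {r}\<close>] p[OF \<open>w \<in> V - {r}\<close>] by simp }
    then show ?thesis unfolding A_def B_def by blast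
  qed
  have sub: "A \<union> B \<subseteq> T"
  proof
    fix e assume "e \<in> A \<union> B"
    then obtain v where v: "v \<in> V - {r}" "e = (v, p v) \<or> e = (p v, v)" unfolding A_def B_def by blast
    have "(v, p v) \<in> T" using p[OF v(1)] by simp
    moreover have "(p v, v) \<in> T" using symD[OF sym \<open>(v, p v) \<in> T\<close>] .
    ultimately show "e \<in> T" using v(2) by blast
  qed
  have finT: "finite T" using TV fin by (meson finite_SigmaI finite_subset)
  have "card (A \<union> B) = card T"
    using card cA cB disj card_Un_disjoint[of A B] finite_subset[OF sub finT] by auto
  then have AB: "A \<union> B = T" using card_subset_eq[OF finT sub] by simp
  have edge: "w = p u" if "(u, w) \<in> T" "D w \<le> D u" for u w
  proof -
    have "(u, w) \<in> A \<union> B" using AB that by simp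
    then show ?thesis
    proof
      assume "(u, w) \<in> A" then show ?thesis unfolding A_def by auto
    next
      assume "(u, w) \<in> B"
      then obtain v where "v \<in> V - {r}" "u = p v" "w = v" unfolding B_def by auto
      then show ?thesis using p[of v] that by auto
    qed
  qed
  have step: "(vs ! q, vs ! (if q + 1 = m then 0 else q + 1)) \<in> T" if "q < m" for q
  proof (cases "q + 1 = m")
    case True
    have ne: "vs \<noteq> []" using cyc(1) by auto
    have "q = length vs - 1" using True m_def by simp
    then have "vs ! q = last vs" by (simp add: last_conv_nth[OF ne])
    moreover have "vs ! 0 = hd vs" by (simp add: hd_conv_nth[OF ne])
    ultimately have "(vs ! q, vs ! 0) \<in> T" using cyc(4) by simp
    then show ?thesis using True by simp
  next
    case False
    then have "Suc q < length vs" using that m_def by simp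
    then have "(vs ! q, vs ! Suc q) \<in> T" using cyc(3) unfolding walk_def by blast
    then show ?thesis using False by simp
  qed
  obtain c where c: "c < m" "\<And>q. q < m \<Longrightarrow> D (vs ! q) \<le> D (vs ! c)"
  proof -
    let ?S = "(\<lambda>q. D (vs ! q)) ` {..<m}"
    have "0 \<in> {..<m}" using \<open>0 < m\<close> by simp
    then have "?S \<noteq> {}" by blast
    then have "Max ?S \<in> ?S" by (intro Max_in) auto
    then obtain c where "c < m" "D (vs ! c) = Max ?S" by auto
    then show ?thesis using that[of c] by auto
  qed
  define a1 where "a1 = (if c + 1 = m then 0 else c + 1)"
  define a2 where "a2 = (if c = 0 then m - 1 else c - 1)"
  have a1m: "a1 < m" and a2m: "a2 < m" using c(1) a1_def a2_def by auto
  have e1: "(vs ! c, vs ! a1) \<in> T" using step[OF c(1)] a1_def by simp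
  have "(vs ! a2, vs ! c) \<in> T" using step[OF a2m] a2_def c(1) cyc(1) m_def
    by (cases "c = 0") auto
  then have e2: "(vs ! c, vs ! a2) \<in> T" by (rule symD[OF sym])
  have "vs ! a1 = p (vs ! c)" using edge[OF e1] c(2)[OF a1m] by simp
  moreover have "vs ! a2 = p (vs ! c)" using edge[OF e2] c(2)[OF a2m] by simp
  ultimately have "vs ! a1 = vs ! a2" by simp
  then have "a1 = a2" using nth_eq_iff_index_eq[OF cyc(2)] a1m a2m m_def by simp
  have m3: "3 \<le> m" using cyc(1) m_def by simp
  show False
  proof (cases "c + 1 = m")
    case True
    then have "a1 = 0" using a1_def by simp
    show False
    proof (cases "c = 0")
      case True then show False using \<open>c + 1 = m\<close> m3 by simp
    next
      case False then have "a2 = c - 1" using a2_def by simp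
      then show False using \<open>a1 = a2\<close> \<open>a1 = 0\<close> False \<open>c + 1 = m\<close> m3 by simp
    qed
  next
    case False
    then have "a1 = c + 1" using a1_def by simp
    show False
    proof (cases "c = 0")
      case True then have "a2 = m - 1" using a2_def by simp
      then show False using \<open>a1 = a2\<close> \<open>a1 = c + 1\<close> True m3 by simp
    next
      case False then have "a2 = c - 1" using a2_def by simp
      then show False using \<open>a1 = a2\<close> \<open>a1 = c + 1\<close> by simp
    qed
  qed
qed



lemma adm_facts:
  assumes adm: "admissible_tree n E \<delta> T" and EV: "E \<subseteq> {1..n} \<times> {1..n}"
  shows "T \<subseteq> {1..n} \<times> {1..n}" "sym T" "connected_on {1..n} T" "T \<subseteq> E"
    "\<And>i. i \<in> {1..n} \<Longrightarrow> deg T i = \<delta> i"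
  using assms unfolding admissible_tree_def spanning_tree_def by auto

lemma conn_walk:
  assumes "connected_on V T" "i \<in> V" "j \<in> V"
  obtains vs where "walk T vs" "hd vs = i" "last vs = j" "length vs = Suc (tdist T i j)"
proof -
  obtain ws where "walk T ws" "hd ws = i" "last ws = j" using assms unfolding connected_on_def by blast
  then show ?thesis using tdist_ex that by blast
qed

lemma tdist_bound:
  assumes adm: "admissible_tree n E \<delta> T" and EV: "E \<subseteq> {1..n} \<times> {1..n}"
    and i: "i \<in> {1..n}" and j: "j \<in> {1..n}"
  shows "tdist T i j \<le> card {i\<in>{1..n}. \<delta> i > 1} + 1"
proof -
  note F = adm_facts[OF adm EV]
  define t where "t = tdist T i j"
  obtain vs where vs: "walk T vs" "hd vs = i" "last vs = j" "length vs = Suc t"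
    using conn_walk[OF F(3) i j] t_def by metis
  have dist: "distinct vs" using shortest_distinct vs t_def by blast
  show ?thesis
  proof (cases "t = 0")
    case True then show ?thesis using t_def by simp
  next
    case False
    let ?I = "(\<lambda>q. vs ! q) ` {1..<t}"
    have cI: "card ?I = t - 1"
      by (subst card_image) (auto simp: inj_on_def nth_eq_iff_index_eq[OF dist] vs(4))
    have "?I \<subseteq> {i\<in>{1..n}. \<delta> i > 1}"
    proof
      fix v assume "v \<in> ?I"
      then obtain q where q: "1 \<le> q" "q < t" "v = vs ! q" by auto
      have vV: "v \<in> {1..n}" using walk_in[OF vs(1) F(1)] q vs(4) by auto
      have e1: "(v, vs ! Suc q) \<in> T" using vs(1) q vs(4) unfolding walk_def by auto
      have "Suc (q - 1) < length vs" using q vs(4) by simp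
      then have "(vs ! (q - 1), vs ! Suc (q - 1)) \<in> T" using vs(1) unfolding walk_def by blast
      then have "(vs ! (q - 1), v) \<in> T" using q by simp
      then have e2: "(v, vs ! (q - 1)) \<in> T" by (rule symD[OF F(2)])
      have i1: "q - 1 < length vs" "Suc q < length vs" "q - 1 \<noteq> Suc q" using q vs(4) by auto
      have ne: "vs ! (q - 1) \<noteq> vs ! Suc q"
      proof
        assume "vs ! (q - 1) = vs ! Suc q"
        then have "q - 1 = Suc q" using nth_eq_iff_index_eq[OF dist i1(1,2)] by simp
        then show False using i1(3) by simp
      qed
      have "{j. (v, j) \<in> T} \<subseteq> {1..n}" using F(1) by blast
      then have fin: "finite {j. (v, j) \<in> T}" using finite_subset by blast
      have "{vs ! (q - 1), vs ! Suc q} \<subseteq> {j. (v, j) \<in> T}" using e1 e2 by auto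
      then have "card {vs ! (q - 1), vs ! Suc q} \<le> deg T v" unfolding deg_def
        using fin by (intro card_mono) auto
      then have "deg T v \<ge> 2" using ne by simp
      then show "v \<in> {i\<in>{1..n}. \<delta> i > 1}" using F(5)[OF vV] vV by simp
    qed
    then have "card ?I \<le> card {i\<in>{1..n}. \<delta> i > 1}" by (intro card_mono) auto
    then show ?thesis using cI t_def by simp
  qed
qed

lemma tdist_self: "tdist T i i = 0"
  using tdist_le[of T "[i]" i i] by simp

lemma tdist_pos2:
  assumes "connected_on V T" "i \<in> V" "j \<in> V" "i \<noteq> j" shows "tdist T i j \<ge> 1"
  using conn_walk[OF assms(1-3)] tdist_pos assms(4) by metis

lemma next_hop:
  assumes "connected_on V T" "T \<subseteq> V \<times> V" "i \<in> V" "j \<in> V" "i \<noteq> j" "(i, j) \<notin> T"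
  shows "\<exists>k. (i, k) \<in> T \<and> k \<noteq> j \<and> Suc (tdist T k j) = tdist T i j"
proof -
  obtain ws where ws: "walk T ws" "hd ws = i" "last ws = j" "length ws = Suc (tdist T i j)"
    using conn_walk[OF assms(1,3,4)] by metis
  have "length ws \<noteq> 1"
  proof
    assume "length ws = 1"
    then obtain a where "ws = [a]" by (cases ws) auto
    then show False using ws(2,3) assms(5) by simp
  qed
  have ne: "ws \<noteq> []" using ws(1) by auto
  then have ws1: "ws = i # tl ws" using ws(2) by (cases ws) auto
  then have "tl ws \<noteq> []" using \<open>length ws \<noteq> 1\<close> by (metis length_Cons list.size(3) One_nat_def)
  then obtain w rest where "tl ws = w # rest" by (cases "tl ws") auto
  then have wr: "ws = i # w # rest" using ws1 by simp
  have wa: "walk T (w # rest)" and iw: "(i, w) \<in> T" using ws(1) wr by auto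
  have lw: "last (w # rest) = j" using ws(3) wr by simp
  have le1: "tdist T w j \<le> length rest" using tdist_le[OF wa _ lw] by simp
  have wV: "w \<in> V" using iw assms(2) by auto
  obtain us where us: "walk T us" "hd us = w" "last us = j" "length us = Suc (tdist T w j)"
    using conn_walk[OF assms(1) wV assms(4)] by metis
  have "us = w # tl us" using us by (cases us) auto
  then have "walk T (i # us)" using us(1) iw by (metis walk_Cons2)
  then have "tdist T i j \<le> length (i # us) - 1" using us by (intro tdist_le) auto
  then have eq: "Suc (tdist T w j) = tdist T i j" using le1 us(4) ws(4) wr by simp
  have "w \<noteq> j"
  proof
    assume "w = j"
    then have "tdist T i j = 1" using eq tdist_self[of T j] by simp
    then have "rest = []" using ws(4) wr by simp
    then show False using ws(3) wr assms(6) iw by simp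
  qed
  then show ?thesis using iw eq by blast
qed

lemma sum_indicator: "finite A \<Longrightarrow> (\<Sum>j\<in>A. if Q j then 1 else 0) = (int (card {j\<in>A. Q j}))"
  by (simp add: sum.inter_filter[symmetric])

lemma tree_feasible:
  assumes EV: "E \<subseteq> {1..n} \<times> {1..n}" and adm: "admissible_tree n E \<delta> T"
    and LM: "M \<ge> real L" and L: "L = card {i\<in>{1..n}. \<delta> i > 1} + 2"
  shows "\<exists>x y d. F1L_feasible n E \<delta> L M x y d \<and> F1L_obj n \<mu> d = comm_cost n \<mu> T"
proof -
  note F = adm_facts[OF adm EV]
  define P where "P i k j \<longleftrightarrow> (i, k) \<in> T \<and> k \<noteq> j \<and> Suc (tdist T k j) = tdist T i j" for i k j
  define x :: "nat \<Rightarrow> nat \<Rightarrow> int" where "x i j = (if (i, j) \<in> T then 1 else 0)" for i j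
  define y :: "nat \<Rightarrow> nat \<Rightarrow> nat \<Rightarrow> int"
    where "y i k j = (if P i k j \<and> k = (SOME k. P i k j) then 1 else 0)" for i k j
  define d :: "nat \<Rightarrow> nat \<Rightarrow> int" where "d i j = int (tdist T i j)" for i j
  have dsym: "d i j = d j i" for i j using tdist_sym[OF F(2)] d_def by simp
  have dpos: "1 \<le> d i j" if "i \<in> {1..n}" "j \<in> {1..n}" "i \<noteq> j" for i j
    using tdist_pos2[OF F(3) that] d_def by simp
  have dL: "d i j \<le> int L" if "i \<in> {1..n}" "j \<in> {1..n}" for i j
    using tdist_bound[OF adm EV that] d_def L by simp
  have noP: "\<not> P i k j" if "(i, j) \<in> T" "k \<in> {1..n}" "j \<in> {1..n}" for i k j
  proof
    assume p: "P i k j"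
    have "tdist T i j \<le> 1" using tdist_le[of T "[i, j]" i j] that by simp
    then have "tdist T k j = 0" using p P_def by simp
    then show False using tdist_pos2[OF F(3) that(2,3)] p P_def by simp
  qed
  have ysum: "(\<Sum>k\<in>{k\<in>{1..n}. (i,k) \<in> E \<and> k \<noteq> j}. y i k j) = (if (i, j) \<in> T then 0 else 1)"
    if "i \<in> {1..n}" "j \<in> {1..n}" "i \<noteq> j" for i j
  proof (cases "(i, j) \<in> T")
    case True
    have "y i k j = 0" if "k \<in> {k\<in>{1..n}. (i,k) \<in> E \<and> k \<noteq> j}" for k
      using noP[OF True _ \<open>j \<in> {1..n}\<close>, of k] that unfolding y_def by auto
    then show ?thesis using True by simp
  next
    case False
    then have "\<exists>k. P i k j" using next_hop[OF F(3) F(1) that False] P_def by blast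
    then have pk: "P i (SOME k. P i k j) j" by (rule someI_ex)
    define k0 where "k0 = (SOME k. P i k j)"
    have k0: "P i k0 j" using pk k0_def by simp
    have yk: "y i k j = (if k = k0 then 1 else 0)" for k
      using k0 unfolding y_def k0_def[symmetric] by auto
    have k0S: "k0 \<in> {k\<in>{1..n}. (i,k) \<in> E \<and> k \<noteq> j}"
      using k0 F(1) F(4) unfolding P_def by auto
    have "(\<Sum>k\<in>{k\<in>{1..n}. (i,k) \<in> E \<and> k \<noteq> j}. y i k j) =
          (\<Sum>k\<in>{k\<in>{1..n}. (i,k) \<in> E \<and> k \<noteq> j}. if k = k0 then 1 else 0)"
      using yk by (intro sum.cong) auto
    also have "\<dots> = 1" using k0S by simp
    finally show ?thesis using False by simp
  qed
  have feas: "F1L_feasible n E \<delta> L M x y d"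
    unfolding F1L_feasible_def
  proof (intro conjI)
    show "\<forall>(i,j)\<in>E. x i j = x j i \<and> x i j \<in> {0,1}" unfolding x_def using F(2) by (auto simp: sym_def)
    show "\<forall>i\<in>{1..n}. \<forall>j\<in>{1..n}. i \<noteq> j \<longrightarrow> d i j = d j i \<and> 1 \<le> d i j \<and> d i j \<le> int L"
      using dsym dpos dL by blast
    show "\<forall>i\<in>{1..n}. \<forall>j\<in>{1..n}. \<forall>k. i < j \<and> (i,k) \<in> E \<and> k \<noteq> j \<longrightarrow> y i k j \<in> {0,1}"
      using y_def by auto
    show "\<forall>i\<in>{1..n}. \<forall>j\<in>{1..n}. \<forall>k. i < j \<and> (i,k) \<in> E \<and> k \<noteq> j \<longrightarrow>
        real_of_int (d i j) \<ge> real_of_int (d k j) + 1 - M * (1 - real_of_int (y i k j))"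
    proof (intro ballI allI impI)
      fix i j k assume ij: "i \<in> {1..n}" "j \<in> {1..n}" and h: "i < j \<and> (i,k) \<in> E \<and> k \<noteq> j"
      have kV: "k \<in> {1..n}" using h EV by auto
      show "real_of_int (d i j) \<ge> real_of_int (d k j) + 1 - M * (1 - real_of_int (y i k j))"
      proof (cases "y i k j = 1")
        case True
        then have "P i k j" using y_def by (auto split: if_splits)
        then show ?thesis using True d_def P_def by simp
      next
        case False
        then have "y i k j = 0" using y_def by (auto split: if_splits)
        moreover have "d k j \<le> int L" using dL[OF kV ij(2)] .
        moreover have "1 \<le> d i j" using dpos[OF ij] h by simp
        ultimately show ?thesis using LM by simp
      qed
    qed
    show "\<forall>(i,j)\<in>E. i < j \<longrightarrow> (\<Sum>k\<in>{k\<in>{1..n}. (i,k) \<in> E \<and> k \<noteq> j}. y i k j) = 1 - x i j"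
    proof (intro ballI impI, clarify)
      fix i j assume "(i, j) \<in> E" "i < j"
      then have "i \<in> {1..n}" "j \<in> {1..n}" "i \<noteq> j" using EV by auto
      then show "(\<Sum>k\<in>{k\<in>{1..n}. (i,k) \<in> E \<and> k \<noteq> j}. y i k j) = 1 - x i j"
        using ysum x_def by simp
    qed
    show "\<forall>i\<in>{1..n}. \<forall>j\<in>{1..n}. i < j \<and> (i,j) \<notin> E \<longrightarrow>
        (\<Sum>k\<in>{k\<in>{1..n}. (i,k) \<in> E \<and> k \<noteq> j}. y i k j) = 1"
    proof (intro ballI impI)
      fix i j assume a: "i \<in> {1..n}" "j \<in> {1..n}" "i < j \<and> (i,j) \<notin> E"
      then have "(i, j) \<notin> T" "i \<noteq> j" using F(4) by auto
      then show "(\<Sum>k\<in>{k\<in>{1..n}. (i,k) \<in> E \<and> k \<noteq> j}. y i k j) = 1"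
        using ysum[OF a(1,2)] by simp
    qed
    show "\<forall>i\<in>{1..n}. \<forall>j\<in>{1..n}. \<forall>k. i < j \<and> (i,k) \<in> E \<and> k \<noteq> j \<longrightarrow> y i k j \<le> x i k"
    proof (intro ballI allI impI)
      fix i j k
      show "y i k j \<le> x i k"
      proof (cases "P i k j")
        case True then show ?thesis unfolding y_def x_def P_def by simp
      next
        case False then show ?thesis unfolding y_def x_def by simp
      qed
    qed
    show "\<forall>i\<in>{1..n}. (\<Sum>j\<in>{j\<in>{1..n}. (i,j) \<in> E}. x i j) = int (\<delta> i)"
    proof
      fix i assume i: "i \<in> {1..n}"
      have "(\<Sum>j\<in>{j\<in>{1..n}. (i,j) \<in> E}. x i j) = int (card {j\<in>{j\<in>{1..n}. (i,j) \<in> E}. (i,j) \<in> T})"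
        unfolding x_def by (rule sum_indicator) auto
      also have "{j\<in>{j\<in>{1..n}. (i,j) \<in> E}. (i,j) \<in> T} = {j. (i, j) \<in> T}" using F(1) F(4) by auto
      finally show "(\<Sum>j\<in>{j\<in>{1..n}. (i,j) \<in> E}. x i j) = int (\<delta> i)"
        using F(5)[OF i] unfolding deg_def by simp
    qed
  qed
  have "F1L_obj n \<mu> d = comm_cost n \<mu> T" unfolding F1L_obj_def comm_cost_def d_def by simp
  then show ?thesis using feas by blast
qed

lemma feasible_walks:
  assumes EV: "E \<subseteq> {1..n} \<times> {1..n}"
    and feas: "F1L_feasible n E \<delta> L M x y d"
    and symT: "sym {(i, j) \<in> E. x i j = 1}"
  shows "\<And>i j. i \<in> {1..n} \<Longrightarrow> j \<in> {1..n} \<Longrightarrow> i \<noteq> j \<Longrightarrow>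
     \<exists>vs. walk {(i, j) \<in> E. x i j = 1} vs \<and> hd vs = i \<and> last vs = j \<and> length vs \<le> nat (d i j) + 1"
proof -
  let ?T = "{(i, j) \<in> E. x i j = 1}"
  note fd = feas[unfolded F1L_feasible_def]
  note c1 = fd[THEN conjunct1]
  note c2 = fd[THEN conjunct2, THEN conjunct1]
  note c3 = fd[THEN conjunct2, THEN conjunct2, THEN conjunct1]
  note c4 = fd[THEN conjunct2, THEN conjunct2, THEN conjunct2, THEN conjunct1]
  note c5 = fd[THEN conjunct2, THEN conjunct2, THEN conjunct2, THEN conjunct2, THEN conjunct1]
  note c6 = fd[THEN conjunct2, THEN conjunct2, THEN conjunct2, THEN conjunct2, THEN conjunct2, THEN conjunct1]
  note c7 = fd[THEN conjunct2, THEN conjunct2, THEN conjunct2, THEN conjunct2, THEN conjunct2, THEN conjunct2, THEN conjunct1]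
  have xb: "\<And>i j. (i, j) \<in> E \<Longrightarrow> x i j = x j i \<and> x i j \<in> {0,1}" using c1 by auto
  have db: "\<And>i j. i \<in> {1..n} \<Longrightarrow> j \<in> {1..n} \<Longrightarrow> i \<noteq> j \<Longrightarrow> d i j = d j i \<and> 1 \<le> d i j \<and> d i j \<le> int L"
    using c2 by blast
  have yb: "\<And>i j k. i \<in> {1..n} \<Longrightarrow> j \<in> {1..n} \<Longrightarrow> i < j \<and> (i,k) \<in> E \<and> k \<noteq> j \<Longrightarrow> y i k j \<in> {0,1}"
    using c3 by blast
  have dc: "\<And>i j k. i \<in> {1..n} \<Longrightarrow> j \<in> {1..n} \<Longrightarrow> i < j \<and> (i,k) \<in> E \<and> k \<noteq> j \<Longrightarrow>
        real_of_int (d i j) \<ge> real_of_int (d k j) + 1 - M * (1 - real_of_int (y i k j))"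
    using c4 by blast
  have s1: "\<And>i j. (i,j) \<in> E \<Longrightarrow> i < j \<Longrightarrow> (\<Sum>k\<in>{k\<in>{1..n}. (i,k) \<in> E \<and> k \<noteq> j}. y i k j) = 1 - x i j"
    using c5 by auto
  have s2: "\<And>i j. i \<in> {1..n} \<Longrightarrow> j \<in> {1..n} \<Longrightarrow> i < j \<and> (i,j) \<notin> E \<Longrightarrow>
        (\<Sum>k\<in>{k\<in>{1..n}. (i,k) \<in> E \<and> k \<noteq> j}. y i k j) = 1"
    using c6 by blast
  have yx: "\<And>i j k. i \<in> {1..n} \<Longrightarrow> j \<in> {1..n} \<Longrightarrow> i < j \<and> (i,k) \<in> E \<and> k \<noteq> j \<Longrightarrow> y i k j \<le> x i k"
    using c7 by blast
  have main: "\<forall>i j. i \<in> {1..n} \<longrightarrow> j \<in> {1..n} \<longrightarrow> i \<noteq> j \<longrightarrow> nat (d i j) \<le> N \<longrightarrow>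
     (\<exists>vs. walk ?T vs \<and> hd vs = i \<and> last vs = j \<and> length vs \<le> nat (d i j) + 1)" for N
  proof (induction N)
    case 0
    show ?case
    proof (intro allI impI)
      fix i j assume a: "i \<in> {1..n}" "j \<in> {1..n}" "i \<noteq> j" "nat (d i j) \<le> 0"
      then have False using db[OF a(1-3)] by simp
      then show "\<exists>vs. walk ?T vs \<and> hd vs = i \<and> last vs = j \<and> length vs \<le> nat (d i j) + 1" ..
    qed
  next
    case (Suc N)
    have lt: "\<exists>vs. walk ?T vs \<and> hd vs = i \<and> last vs = j \<and> length vs \<le> nat (d i j) + 1"
      if ij: "i \<in> {1..n}" "j \<in> {1..n}" "i < j" "nat (d i j) \<le> Suc N" for i j
    proof (cases "(i, j) \<in> E \<and> x i j = 1")
      case True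
      then have "walk ?T [i, j]" by simp
      moreover have "1 \<le> d i j" using db[OF ij(1,2)] ij(3) by simp
      ultimately show ?thesis by (intro exI[of _ "[i, j]"]) auto
    next
      case False
      have "(\<Sum>k\<in>{k\<in>{1..n}. (i,k) \<in> E \<and> k \<noteq> j}. y i k j) = 1"
      proof (cases "(i, j) \<in> E")
        case True
        then have "x i j = 0" using False xb[OF True] by auto
        then show ?thesis using s1[OF True ij(3)] by simp
      next
        case False
        then show ?thesis using s2 ij by blast
      qed
      then have "\<exists>k\<in>{k\<in>{1..n}. (i,k) \<in> E \<and> k \<noteq> j}. y i k j \<noteq> 0"
      proof (rule contrapos_pp)
        assume "\<not> (\<exists>k\<in>{k\<in>{1..n}. (i,k) \<in> E \<and> k \<noteq> j}. y i k j \<noteq> 0)"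
        then have "(\<Sum>k\<in>{k\<in>{1..n}. (i,k) \<in> E \<and> k \<noteq> j}. y i k j) = 0"
          by (intro sum.neutral) blast
        then show "(\<Sum>k\<in>{k\<in>{1..n}. (i,k) \<in> E \<and> k \<noteq> j}. y i k j) \<noteq> 1" by simp
      qed
      then obtain k where k: "k \<in> {k\<in>{1..n}. (i,k) \<in> E \<and> k \<noteq> j}" "y i k j \<noteq> 0"
        by blast
      have h: "i < j \<and> (i,k) \<in> E \<and> k \<noteq> j" using k ij by simp
      have y1: "y i k j = 1" using yb[OF ij(1,2) h] k(2) by auto
      have "x i k = 1" using yx[OF ij(1,2) h] y1 xb[of i k] h by auto
      then have ik: "(i, k) \<in> ?T" using h by simp
      have "real_of_int (d i j) \<ge> real_of_int (d k j) + 1" using dc[OF ij(1,2) h] y1 by simp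
      then have dd: "d i j \<ge> d k j + 1" by linarith
      have kV: "k \<in> {1..n}" using k by simp
      have "1 \<le> d k j" using db[OF kV ij(2)] h by simp
      then have "nat (d k j) \<le> N" using dd ij(4) by linarith
      then obtain vs where vs: "walk ?T vs" "hd vs = k" "last vs = j" "length vs \<le> nat (d k j) + 1"
        using Suc.IH[rule_format, OF kV ij(2)] h by blast
      obtain rest where vr: "vs = k # rest" using vs by (cases vs) auto
      have "walk ?T (i # k # rest)" using ik vs(1) vr by simp
      then have "walk ?T (i # vs)" using vr by simp
      moreover have "last (i # vs) = j" using vs by (cases vs) auto
      moreover have "length (i # vs) \<le> nat (d i j) + 1" using vs(4) dd \<open>1 \<le> d k j\<close> by simp
      ultimately show ?thesis by (intro exI[of _ "i # vs"]) auto
    qed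
    show ?case
    proof (intro allI impI)
      fix i j assume ij: "i \<in> {1..n}" "j \<in> {1..n}" "i \<noteq> j" "nat (d i j) \<le> Suc N"
      show "\<exists>vs. walk ?T vs \<and> hd vs = i \<and> last vs = j \<and> length vs \<le> nat (d i j) + 1"
      proof (cases "i < j")
        case True then show ?thesis using lt ij by blast
      next
        case False
        then have "j < i" using ij by simp
        moreover have "d j i = d i j" using db[OF ij(1-3)] by simp
        ultimately obtain vs where vs: "walk ?T vs" "hd vs = j" "last vs = i" "length vs \<le> nat (d i j) + 1"
          using lt[of j i] ij by auto
        then show ?thesis using walk_rev[OF symT vs(1)]
          by (intro exI[of _ "rev vs"]) (auto simp: hd_rev last_rev)
      qed
    qed
  qed
  fix i j assume "i \<in> {1..n}" "j \<in> {1..n}" "i \<noteq> j"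
  then show "\<exists>vs. walk ?T vs \<and> hd vs = i \<and> last vs = j \<and> length vs \<le> nat (d i j) + 1"
    using main[of "nat (d i j)"] by blast
qed



theorem proposition3:
  fixes n :: nat and E :: "(nat \<times> nat) set" and \<mu> :: "nat \<Rightarrow> nat \<Rightarrow> real"
    and \<delta> :: "nat \<Rightarrow> nat" and M :: real
    and x :: "nat \<Rightarrow> nat \<Rightarrow> int" and y :: "nat \<Rightarrow> nat \<Rightarrow> nat \<Rightarrow> int" and d :: "nat \<Rightarrow> nat \<Rightarrow> int"
  assumes E_V: "E \<subseteq> {1..n} \<times> {1..n}"
    and E_sym: "\<And>i j. (i, j) \<in> E \<Longrightarrow> (j, i) \<in> E"
    and E_noloop: "\<And>i. (i, i) \<notin> E"
    and mu_sym: "\<And>i j. i \<in> {1..n} \<Longrightarrow> j \<in> {1..n} \<Longrightarrow> i \<noteq> j \<Longrightarrow> \<mu> i j = \<mu> j i"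
    and mu_nonneg: "\<And>i j. i \<in> {1..n} \<Longrightarrow> j \<in> {1..n} \<Longrightarrow> i \<noteq> j \<Longrightarrow> \<mu> i j \<ge> 0"
    and delta_pos: "\<And>i. i \<in> {1..n} \<Longrightarrow> \<delta> i \<ge> 1"
    and delta_sum: "(\<Sum>i\<in>{1..n}. \<delta> i) = 2 * (n - 1)"
    and admissible_exists: "\<exists>T. admissible_tree n E \<delta> T"
    and M_ge: "M \<ge> real (card {i\<in>{1..n}. \<delta> i > 1} + 2)"
    and opt: "F1L_optimal n E \<mu> \<delta> (card {i\<in>{1..n}. \<delta> i > 1} + 2) M x y d"
  shows "optimal_tree n E \<mu> \<delta> {(i, j) \<in> E. x i j = 1}
         \<and> F1L_obj n \<mu> d = comm_cost n \<mu> {(i, j) \<in> E. x i j = 1}"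
proof -
  define T where "T = {(i, j) \<in> E. x i j = 1}"
  have feas: "F1L_feasible n E \<delta> (card {i\<in>{1..n}. \<delta> i > 1} + 2) M x y d"
    using opt unfolding F1L_optimal_def by blast
  have optd: "F1L_obj n \<mu> d \<le> F1L_obj n \<mu> d'"
    if "F1L_feasible n E \<delta> (card {i\<in>{1..n}. \<delta> i > 1} + 2) M x' y' d'" for x' y' d'
    using opt that unfolding F1L_optimal_def by blast
  note fd = feas[unfolded F1L_feasible_def]
  note c1 = fd[THEN conjunct1]
  note c2 = fd[THEN conjunct2, THEN conjunct1]
  note c8 = fd[THEN conjunct2, THEN conjunct2, THEN conjunct2, THEN conjunct2, THEN conjunct2,
    THEN conjunct2, THEN conjunct2]
  have xb: "x i j = x j i \<and> x i j \<in> {0,1}" if "(i, j) \<in> E" for i j using c1 that by auto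
  have db: "1 \<le> d i j" if "i \<in> {1..n}" "j \<in> {1..n}" "i \<noteq> j" for i j using c2 that by blast
  have xdeg: "(\<Sum>j\<in>{j\<in>{1..n}. (i,j) \<in> E}. x i j) = int (\<delta> i)" if "i \<in> {1..n}" for i
    using c8 that by blast
  have TE: "T \<subseteq> E" unfolding T_def by auto
  have TV: "T \<subseteq> {1..n} \<times> {1..n}" using TE E_V by blast
  have symT: "sym T" unfolding sym_def
  proof (intro allI impI)
    fix i j assume "(i, j) \<in> T"
    then have "(i, j) \<in> E" "x i j = 1" unfolding T_def by auto
    then show "(j, i) \<in> T" using E_sym[of i j] xb[of i j] unfolding T_def by simp
  qed
  have walks: "\<exists>vs. walk T vs \<and> hd vs = i \<and> last vs = j \<and> length vs \<le> nat (d i j) + 1"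
    if "i \<in> {1..n}" "j \<in> {1..n}" "i \<noteq> j" for i j
    using feasible_walks[OF E_V feas symT[unfolded T_def] that] unfolding T_def .
  have conn: "connected_on {1..n} T" unfolding connected_on_def
  proof (intro ballI)
    fix i j assume ij: "i \<in> {1..n}" "j \<in> {1..n}"
    show "\<exists>vs. walk T vs \<and> hd vs = i \<and> last vs = j"
    proof (cases "i = j")
      case True then show ?thesis by (intro exI[of _ "[i]"]) simp
    next
      case False then show ?thesis using walks[OF ij False] by blast
    qed
  qed
  have deg: "deg T i = \<delta> i" if i: "i \<in> {1..n}" for i
  proof -
    have "(\<Sum>j\<in>{j\<in>{1..n}. (i,j) \<in> E}. x i j) = (\<Sum>j\<in>{j\<in>{1..n}. (i,j) \<in> E}. if x i j = 1 then 1 else 0)"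
    proof (rule sum.cong)
      fix j assume "j \<in> {j\<in>{1..n}. (i,j) \<in> E}"
      then have "(i, j) \<in> E" by simp
      then have "x i j \<in> {0,1}" using xb[of i j] by blast
      then show "x i j = (if x i j = 1 then 1 else 0)" by auto
    qed simp
    also have "\<dots> = int (card {j\<in>{j\<in>{1..n}. (i,j) \<in> E}. x i j = 1})" by (rule sum_indicator) simp
    also have "{j\<in>{j\<in>{1..n}. (i,j) \<in> E}. x i j = 1} = {j. (i, j) \<in> T}"
      unfolding T_def using E_V by blast
    finally show ?thesis using xdeg[OF i] unfolding deg_def by simp
  qed
  have cardT: "card T = 2 * (card {1..n} - 1)"
  proof -
    have "T = Sigma {1..n} (\<lambda>i. {j. (i, j) \<in> T})" using TV by blast
    moreover have "finite {j. (i, j) \<in> T}" for i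
    proof -
      have "{j. (i, j) \<in> T} \<subseteq> {1..n}" using TV by blast
      then show ?thesis using finite_subset by blast
    qed
    ultimately have "card T = (\<Sum>i\<in>{1..n}. card {j. (i, j) \<in> T})"
      by (metis card_SigmaI finite_atLeastAtMost)
    also have "\<dots> = (\<Sum>i\<in>{1..n}. \<delta> i)" using deg unfolding deg_def by (intro sum.cong) auto
    finally show ?thesis using delta_sum by simp
  qed
  have acyc: "acyclic_graph T" by (rule acyclic_by_count[OF finite_atLeastAtMost TV symT conn cardT])
  have adm: "admissible_tree n E \<delta> T"
    unfolding admissible_tree_def spanning_tree_def using TE symT conn acyc deg by blast
  have le1: "comm_cost n \<mu> T \<le> F1L_obj n \<mu> d"
    unfolding comm_cost_def F1L_obj_def
  proof (intro sum_mono)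
    fix i j assume i: "i \<in> {1..n}" and j: "j \<in> {1..n} - {i}"
    then have jV: "j \<in> {1..n}" and ne: "i \<noteq> j" by auto
    obtain vs where vs: "walk T vs" "hd vs = i" "last vs = j" "length vs \<le> nat (d i j) + 1"
      using walks[OF i jV ne] by blast
    have "tdist T i j \<le> nat (d i j)" using tdist_le[OF vs(1-3)] vs(4) by simp
    then have "real (tdist T i j) \<le> real_of_int (d i j)" using db[OF i jV ne] by linarith
    then show "\<mu> i j * real (tdist T i j) \<le> \<mu> i j * real_of_int (d i j)"
      using mu_nonneg[OF i jV ne] by (rule mult_left_mono)
  qed
  have le2: "F1L_obj n \<mu> d \<le> comm_cost n \<mu> T'" if admT: "admissible_tree n E \<delta> T'" for T'
  proof -
    obtain x' y' d' where "F1L_feasible n E \<delta> (card {i\<in>{1..n}. \<delta> i > 1} + 2) M x' y' d'"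
      "F1L_obj n \<mu> d' = comm_cost n \<mu> T'"
      using tree_feasible[OF E_V admT M_ge refl] by blast
    then show ?thesis using optd by fastforce
  qed
  have "optimal_tree n E \<mu> \<delta> T" unfolding optimal_tree_def using adm le1 le2 by fastforce
  moreover have "F1L_obj n \<mu> d = comm_cost n \<mu> T" using le1 le2[OF adm] by simp
  ultimately show ?thesis unfolding T_def by simp
qed

end
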